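(* Let $\Gamma$ be a geometry of type $C_3$. Then every closed path of $\Gamma$ based at a point is homotopic to a primitive path.
   Context: A geometry of type $C_3$ is a (residually connected) rank-3 Tits geometry belonging to the diagram $\circ\!-\!\circ\!=\!\circ$, with types $1,2,3$ called points, lines and planes respectively (residue of a plane: a projective plane on its points and lines; residue of a point: a generalized quadrangle on its lines and planes; residue of a line: a generalized digon). Paths and homotopy: a path is a sequence of elements with consecutive elements incident; homotopy $\sim$ is the equivalence relation on paths with fixed endpoints generated by $(x,y,x)\leftrightarrow(x)$ and $(x,y,z)\leftrightarrow(x,z)$ for flags $\{x,y,z\}$ (homotopy in the flag complex). A primitive path is a closed path $(p,L,q,M,p)$ with $p,q$ points and $L,M$ lines; it is degenerate if $p=q$ or $L=M$. *)

theory Defs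
  imports Main
begin

text \<open>A rank-3 incidence geometry is given by a set of elements X, a type function
  t (types 1 = points, 2 = lines, 3 = planes) and a symmetric, reflexive incidence
  relation I on X such that distinct elements of the same type are never incident.\<close>

definition incidence_geometry3 :: "'a set \<Rightarrow> ('a \<Rightarrow> nat) \<Rightarrow> ('a \<Rightarrow> 'a \<Rightarrow> bool) \<Rightarrow> bool" where
  "incidence_geometry3 X t I \<longleftrightarrow>
     (\<forall>x\<in>X. t x \<in> {1,2,3}) \<and>
     (\<forall>x y. I x y \<longrightarrow> x \<in> X \<and> y \<in> X) \<and>
     (\<forall>x\<in>X. I x x) \<and>
     (\<forall>x y. I x y \<longrightarrow> I y x) \<and>
     (\<forall>x y. I x y \<and> t x = t y \<longrightarrow> x = y)"

definition is_flag :: "'a set \<Rightarrow> ('a \<Rightarrow> 'a \<Rightarrow> bool) \<Rightarrow> 'a set \<Rightarrow> bool" where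
  "is_flag X I F \<longleftrightarrow> F \<subseteq> X \<and> (\<forall>x\<in>F. \<forall>y\<in>F. I x y)"

definition residue :: "'a set \<Rightarrow> ('a \<Rightarrow> 'a \<Rightarrow> bool) \<Rightarrow> 'a set \<Rightarrow> 'a set" where
  "residue X I F = {y \<in> X - F. \<forall>x\<in>F. I x y}"

definition connected_in :: "('a \<Rightarrow> 'a \<Rightarrow> bool) \<Rightarrow> 'a set \<Rightarrow> bool" where
  "connected_in I S \<longleftrightarrow>
     (\<forall>x\<in>S. \<forall>y\<in>S. (\<lambda>a b. a \<in> S \<and> b \<in> S \<and> I a b)\<^sup>*\<^sup>* x y)"

text \<open>Residual connectedness for rank 3: the residue of every flag of corank \<open>\<ge> 2\<close>
  (i.e. of the empty flag and of every single element) is nonempty and connected,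
  and the residue of every flag of corank 1 is nonempty.\<close>
definition residually_connected3 :: "'a set \<Rightarrow> ('a \<Rightarrow> nat) \<Rightarrow> ('a \<Rightarrow> 'a \<Rightarrow> bool) \<Rightarrow> bool" where
  "residually_connected3 X t I \<longleftrightarrow>
     (\<forall>F. is_flag X I F \<and> card (t ` F) \<le> 1 \<longrightarrow>
          residue X I F \<noteq> {} \<and> connected_in I (residue X I F)) \<and>
     (\<forall>F. is_flag X I F \<and> card (t ` F) = 2 \<longrightarrow> residue X I F \<noteq> {})"

definition projective_plane :: "'a set \<Rightarrow> 'a set \<Rightarrow> ('a \<Rightarrow> 'a \<Rightarrow> bool) \<Rightarrow> bool" where
  "projective_plane P L I \<longleftrightarrow>
     (\<forall>p\<in>P. \<forall>q\<in>P. p \<noteq> q \<longrightarrow> (\<exists>!l. l \<in> L \<and> I p l \<and> I q l)) \<and>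
     (\<forall>l\<in>L. \<forall>m\<in>L. l \<noteq> m \<longrightarrow> (\<exists>!p. p \<in> P \<and> I p l \<and> I p m)) \<and>
     (\<exists>a\<in>P. \<exists>b\<in>P. \<exists>c\<in>P. \<exists>d\<in>P. distinct [a,b,c,d] \<and>
        (\<forall>x\<in>{a,b,c,d}. \<forall>y\<in>{a,b,c,d}. \<forall>z\<in>{a,b,c,d}.
            distinct [x,y,z] \<longrightarrow> \<not> (\<exists>l\<in>L. I x l \<and> I y l \<and> I z l)))"

text \<open>Generalized quadrangle on points P and lines L: every line has at least two
  points, every point is on at least two lines, two distinct points are on at most
  one common line, and for every non-incident point-line pair (x,l) there is exactly
  one point on l collinear with x.  (Equivalently: the incidence graph has diameter 4
  and girth 8, and is firm.)\<close>
definition generalized_quadrangle :: "'a set \<Rightarrow> 'a set \<Rightarrow> ('a \<Rightarrow> 'a \<Rightarrow> bool) \<Rightarrow> bool" where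
  "generalized_quadrangle P L I \<longleftrightarrow>
     (\<forall>l\<in>L. \<exists>p\<in>P. \<exists>q\<in>P. p \<noteq> q \<and> I p l \<and> I q l) \<and>
     (\<forall>p\<in>P. \<exists>l\<in>L. \<exists>m\<in>L. l \<noteq> m \<and> I p l \<and> I p m) \<and>
     (\<forall>p\<in>P. \<forall>q\<in>P. \<forall>l\<in>L. \<forall>m\<in>L.
        p \<noteq> q \<and> I p l \<and> I q l \<and> I p m \<and> I q m \<longrightarrow> l = m) \<and>
     (\<forall>x\<in>P. \<forall>l\<in>L. \<not> I x l \<longrightarrow>
        (\<exists>!y. y \<in> P \<and> I y l \<and> (\<exists>m\<in>L. I x m \<and> I y m)))"

definition generalized_digon :: "'a set \<Rightarrow> 'a set \<Rightarrow> ('a \<Rightarrow> 'a \<Rightarrow> bool) \<Rightarrow> bool" where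
  "generalized_digon P L I \<longleftrightarrow> (\<forall>p\<in>P. \<forall>l\<in>L. I p l)"

definition elems_of_type :: "'a set \<Rightarrow> ('a \<Rightarrow> nat) \<Rightarrow> nat \<Rightarrow> 'a set" where
  "elems_of_type S t i = {x \<in> S. t x = i}"

definition C3_geometry :: "'a set \<Rightarrow> ('a \<Rightarrow> nat) \<Rightarrow> ('a \<Rightarrow> 'a \<Rightarrow> bool) \<Rightarrow> bool" where
  "C3_geometry X t I \<longleftrightarrow>
     incidence_geometry3 X t I \<and> residually_connected3 X t I \<and>
     (\<forall>x\<in>X. t x = 3 \<longrightarrow>
        projective_plane (elems_of_type (residue X I {x}) t 1)
                         (elems_of_type (residue X I {x}) t 2) I) \<and>
     (\<forall>x\<in>X. t x = 1 \<longrightarrow>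
        generalized_quadrangle (elems_of_type (residue X I {x}) t 2)
                               (elems_of_type (residue X I {x}) t 3) I) \<and>
     (\<forall>x\<in>X. t x = 2 \<longrightarrow>
        generalized_digon (elems_of_type (residue X I {x}) t 1)
                          (elems_of_type (residue X I {x}) t 3) I)"

definition is_path :: "'a set \<Rightarrow> ('a \<Rightarrow> 'a \<Rightarrow> bool) \<Rightarrow> 'a list \<Rightarrow> bool" where
  "is_path X I p \<longleftrightarrow> p \<noteq> [] \<and> set p \<subseteq> X \<and>
     (\<forall>i. Suc i < length p \<longrightarrow> I (p ! i) (p ! Suc i))"

definition elem_move :: "'a set \<Rightarrow> ('a \<Rightarrow> 'a \<Rightarrow> bool) \<Rightarrow> 'a list \<Rightarrow> 'a list \<Rightarrow> bool" where
  "elem_move X I p q \<longleftrightarrow> is_path X I p \<and> is_path X I q \<and>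
     (\<exists>as bs x y z.
        (p = as @ [x, y, x] @ bs \<and> q = as @ [x] @ bs) \<or>
        (p = as @ [x, y, z] @ bs \<and> q = as @ [x, z] @ bs \<and> is_flag X I {x, y, z}))"

definition homotopic :: "'a set \<Rightarrow> ('a \<Rightarrow> 'a \<Rightarrow> bool) \<Rightarrow> 'a list \<Rightarrow> 'a list \<Rightarrow> bool" where
  "homotopic X I p q \<longleftrightarrow> is_path X I p \<and> (symclp (elem_move X I))\<^sup>*\<^sup>* p q"

definition closed_path :: "'a set \<Rightarrow> ('a \<Rightarrow> 'a \<Rightarrow> bool) \<Rightarrow> 'a list \<Rightarrow> bool" where
  "closed_path X I p \<longleftrightarrow> is_path X I p \<and> hd p = last p"

text \<open>Primitive path (p,L,q,M,p) with p,q points and L,M lines (possibly degenerate).\<close>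
definition primitive_path :: "'a set \<Rightarrow> ('a \<Rightarrow> nat) \<Rightarrow> ('a \<Rightarrow> 'a \<Rightarrow> bool) \<Rightarrow> 'a list \<Rightarrow> bool" where
  "primitive_path X t I c \<longleftrightarrow> is_path X I c \<and>
     (\<exists>p l q m. c = [p, l, q, m, p] \<and> t p = 1 \<and> t q = 1 \<and> t l = 2 \<and> t m = 2)"

end

theory Submission imports Defs begin

lemma is_path_single[simp]: "is_path X I [x] \<longleftrightarrow> x \<in> X"
  by (auto simp: is_path_def)

lemma is_path_Cons2: "is_path X I (x#y#zs) \<longleftrightarrow> x \<in> X \<and> I x y \<and> is_path X I (y#zs)"
proof
  assume h: "is_path X I (x#y#zs)"
  then have "I x y" unfolding is_path_def by (metis length_Cons nth_Cons_0 nth_Cons_Suc zero_less_Suc Suc_less_eq)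
  moreover have "is_path X I (y#zs)" using h unfolding is_path_def
    by (metis Suc_less_eq length_Cons list.discI list.set_intros(2) nth_Cons_Suc set_subset_Cons subset_trans)
  ultimately show "x \<in> X \<and> I x y \<and> is_path X I (y#zs)" using h by (auto simp: is_path_def)
next
  assume h: "x \<in> X \<and> I x y \<and> is_path X I (y#zs)"
  show "is_path X I (x#y#zs)" unfolding is_path_def
  proof (intro conjI allI impI)
    show "set (x#y#zs) \<subseteq> X" using h by (auto simp: is_path_def)
  next
    fix i assume "Suc i < length (x#y#zs)"
    then show "I ((x#y#zs) ! i) ((x#y#zs) ! Suc i)" using h
      by (cases i) (auto simp: is_path_def)
  qed simp
qed

lemma is_path_nonempty: "is_path X I p \<Longrightarrow> p \<noteq> []" by (simp add: is_path_def)

lemma is_path_append: "xs \<noteq> [] \<Longrightarrow> ys \<noteq> [] \<Longrightarrow>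
   is_path X I (xs@ys) \<longleftrightarrow> is_path X I xs \<and> is_path X I ys \<and> I (last xs) (hd ys)"
proof (induction xs rule: induct_list012)
  case (2 x) then show ?case by (cases ys) (auto simp: is_path_Cons2)
next
  case (3 x y zs) then show ?case by (auto simp: is_path_Cons2)
qed simp

lemma is_path_replace:
  assumes "is_path X I (A@p@B)" "is_path X I q" "hd q = hd p" "last q = last p" "p \<noteq> []"
  shows "is_path X I (A@q@B)"
proof -
  have qn: "q \<noteq> []" using assms(2) by (simp add: is_path_def)
  have pB: "is_path X I (p@B) \<and> (A \<noteq> [] \<longrightarrow> I (last A) (hd p))"
    using assms(1) assms(5) by (cases "A = []") (auto simp: is_path_append)
  have qB: "is_path X I (q@B)"
  proof (cases "B = []")
    case True then show ?thesis using assms by simp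
  next
    case False then show ?thesis using pB assms qn by (auto simp: is_path_append)
  qed
  show ?thesis
  proof (cases "A = []")
    case True then show ?thesis using qB by simp
  next
    case False then show ?thesis using pB qB assms qn assms(1)
      by (auto simp: is_path_append)
  qed
qed

lemma elem_move_ends: "elem_move X I p q \<Longrightarrow> hd p = hd q \<and> last p = last q"
  unfolding elem_move_def by (auto simp: hd_append last_append)

lemma elem_move_paths: "elem_move X I p q \<Longrightarrow> is_path X I p \<and> is_path X I q"
  unfolding elem_move_def by blast

lemma symclp_ends: "symclp (elem_move X I) p q \<Longrightarrow> is_path X I q \<and> hd p = hd q \<and> last p = last q"
  unfolding symclp_def using elem_move_ends elem_move_paths by metis

lemma rt_ends: "(symclp (elem_move X I))\<^sup>*\<^sup>* p q \<Longrightarrow> is_path X I p \<Longrightarrow>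
   is_path X I q \<and> hd p = hd q \<and> last p = last q"
  by (induction rule: rtranclp_induct) (auto dest: symclp_ends)

lemma homotopic_ends: "homotopic X I p q \<Longrightarrow> is_path X I p \<and> is_path X I q \<and> hd p = hd q \<and> last p = last q"
  unfolding homotopic_def using rt_ends by blast

lemma homotopic_refl: "is_path X I p \<Longrightarrow> homotopic X I p p"
  by (simp add: homotopic_def)

lemma homotopic_trans: "homotopic X I p q \<Longrightarrow> homotopic X I q r \<Longrightarrow> homotopic X I p r"
  unfolding homotopic_def by auto

lemma homotopic_sym: "homotopic X I p q \<Longrightarrow> homotopic X I q p"
  using homotopic_ends[of X I p q] unfolding homotopic_def
  by (meson symp_rtranclp_symclp sympD)

lemma elem_move_cong: "elem_move X I p q \<Longrightarrow> is_path X I (A@p@B) \<Longrightarrow> is_path X I (A@q@B) \<Longrightarrow>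
   elem_move X I (A@p@B) (A@q@B)"
  unfolding elem_move_def
  apply (elim conjE exE disjE)
   apply (rule conjI, assumption, rule conjI, assumption)
   apply (rule exI[of _ "A@_"], rule exI[of _ "_@B"], auto)[1]
  apply (rule conjI, assumption, rule conjI, assumption)
  apply (rule exI[of _ "A@_"], rule exI[of _ "_@B"], auto)[1]
  done

lemma homotopic_cong:
  assumes "homotopic X I p q" "is_path X I (A@p@B)"
  shows "homotopic X I (A@p@B) (A@q@B)"
proof -
  have pp: "is_path X I p" and r: "(symclp (elem_move X I))\<^sup>*\<^sup>* p q" using assms(1) by (auto simp: homotopic_def)
  from r have "(symclp (elem_move X I))\<^sup>*\<^sup>* (A@p@B) (A@q@B)"
  proof (induction rule: rtranclp_induct)
    case base then show ?case by simp
  next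
    case (step y z)
    have y: "is_path X I y \<and> hd p = hd y \<and> last p = last y" using rt_ends[OF step(1) pp] .
    have z: "is_path X I z \<and> hd y = hd z \<and> last y = last z"
      using step(2) symclp_ends by blast
    have py: "is_path X I (A@y@B)" using is_path_replace[OF assms(2), of y] y pp is_path_nonempty by metis
    have pz: "is_path X I (A@z@B)" using is_path_replace[OF assms(2), of z] y z pp is_path_nonempty by metis
    have "symclp (elem_move X I) (A@y@B) (A@z@B)"
      using step(2) elem_move_cong[OF _ py pz] elem_move_cong[OF _ pz py] by (auto simp: symclp_def)
    then show ?case using step(3) by simp
  qed
  then show ?thesis using assms(2) by (simp add: homotopic_def)
qed


locale C3 =
  fixes X :: "'a set" and t :: "'a \<Rightarrow> nat" and I :: "'a \<Rightarrow> 'a \<Rightarrow> bool"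
  assumes geo: "C3_geometry X t I"
begin

lemma ig: "incidence_geometry3 X t I" using geo by (simp add: C3_geometry_def)

lemma inX: "I x y \<Longrightarrow> x \<in> X \<and> y \<in> X" using ig by (simp add: incidence_geometry3_def)
lemma irefl: "x \<in> X \<Longrightarrow> I x x" using ig by (simp add: incidence_geometry3_def)
lemma isym: "I x y \<Longrightarrow> I y x" using ig by (simp add: incidence_geometry3_def)
lemma isame: "I x y \<Longrightarrow> t x = t y \<Longrightarrow> x = y" using ig by (simp add: incidence_geometry3_def)
lemma itypes: "x \<in> X \<Longrightarrow> t x = 1 \<or> t x = 2 \<or> t x = 3" using ig by (auto simp: incidence_geometry3_def)

lemma bkm: "I x y \<Longrightarrow> homotopic X I [x,y,x] [x]"
proof -
  assume h: "I x y"
  have "elem_move X I [x,y,x] [x]" unfolding elem_move_def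
    using h inX[OF h] isym[OF h]
    by (auto simp: is_path_Cons2 intro!: exI[of _ "[]"])
  then show ?thesis unfolding homotopic_def using elem_move_paths by fastforce
qed

lemma flag3: "I x y \<Longrightarrow> I y z \<Longrightarrow> I x z \<Longrightarrow> homotopic X I [x,y,z] [x,z]"
proof -
  assume h: "I x y" "I y z" "I x z"
  have f: "is_flag X I {x,y,z}" unfolding is_flag_def
    using h inX[OF h(1)] inX[OF h(2)] isym[OF h(1)] isym[OF h(2)] isym[OF h(3)] irefl by auto
  have "elem_move X I [x,y,z] [x,z]" unfolding elem_move_def
    using h inX[OF h(1)] inX[OF h(2)] f
    by (auto simp: is_path_Cons2 intro!: exI[of _ "[]"])
  then show ?thesis unfolding homotopic_def using elem_move_paths by fastforce
qed

lemma dup: "x \<in> X \<Longrightarrow> homotopic X I [x,x] [x]"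
proof -
  assume x: "x \<in> X"
  have "homotopic X I [x,x,x] [x,x]" using flag3[of x x x] irefl[OF x] by simp
  then have "homotopic X I [x,x] [x,x,x]" by (rule homotopic_sym)
  then show ?thesis using bkm[of x x] irefl[OF x] homotopic_trans by blast
qed

lemma star: "is_path X I P \<Longrightarrow> \<forall>y\<in>set P. I e y \<Longrightarrow> homotopic X I P [hd P, e, last P]"
proof (induction P rule: induct_list012)
  case 1 then show ?case by (simp add: is_path_def)
next
  case (2 x)
  then have "I x e" using isym by simp
  then show ?case using bkm homotopic_sym by fastforce
next
  case (3 x y zs)
  have p: "is_path X I (y#zs)" and xy: "I x y" using 3(3) by (auto simp: is_path_Cons2)
  have ih: "homotopic X I (y#zs) [y, e, last (y#zs)]" using 3(2)[OF p] 3(4) by simp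
  have "homotopic X I ([x]@(y#zs)@[]) ([x]@[y, e, last (y#zs)]@[])"
    using homotopic_cong[OF ih, of "[x]" "[]"] 3(3) by simp
  moreover have "homotopic X I ([]@[x,y,e]@[last (y#zs)]) ([]@[x,e]@[last (y#zs)])"
  proof (rule homotopic_cong)
    show "homotopic X I [x,y,e] [x,e]" using flag3 xy 3(4) isym by simp
    show "is_path X I ([] @ [x, y, e] @ [last (y # zs)])"
      using homotopic_ends[OF calculation] by simp
  qed
  ultimately show ?case using homotopic_trans by fastforce
qed

lemma star2: "is_path X I P \<Longrightarrow> is_path X I Q \<Longrightarrow> \<forall>y\<in>set P. I e y \<Longrightarrow> \<forall>y\<in>set Q. I e y \<Longrightarrow>
  hd P = hd Q \<Longrightarrow> last P = last Q \<Longrightarrow> homotopic X I P Q"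
  by (metis star homotopic_sym homotopic_trans)

lemma digon: "t p = 1 \<Longrightarrow> t L = 2 \<Longrightarrow> t \<pi> = 3 \<Longrightarrow> I p L \<Longrightarrow> I L \<pi> \<Longrightarrow> I p \<pi>"
proof -
  assume h: "t p = 1" "t L = 2" "t \<pi> = 3" "I p L" "I L \<pi>"
  have L: "L \<in> X" using inX h by blast
  have "generalized_digon (elems_of_type (residue X I {L}) t 1) (elems_of_type (residue X I {L}) t 3) I"
    using geo L h by (simp add: C3_geometry_def)
  moreover have "p \<in> elems_of_type (residue X I {L}) t 1" "\<pi> \<in> elems_of_type (residue X I {L}) t 3"
    using h inX isym by (auto simp: elems_of_type_def residue_def)
  ultimately show ?thesis by (simp add: generalized_digon_def)
qed

lemma pplane: "t \<pi> = 3 \<Longrightarrow> \<pi> \<in> X \<Longrightarrow> projective_plane (elems_of_type (residue X I {\<pi>}) t 1) (elems_of_type (residue X I {\<pi>}) t 2) I"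
  using geo by (simp add: C3_geometry_def)

lemma pp_line: "t \<pi> = 3 \<Longrightarrow> t p = 1 \<Longrightarrow> t q = 1 \<Longrightarrow> I p \<pi> \<Longrightarrow> I q \<pi> \<Longrightarrow> p \<noteq> q \<Longrightarrow>
   \<exists>M. t M = 2 \<and> I M \<pi> \<and> I p M \<and> I q M"
proof -
  assume h: "t \<pi> = 3" "t p = 1" "t q = 1" "I p \<pi>" "I q \<pi>" "p \<noteq> q"
  have pi: "\<pi> \<in> X" using inX h by blast
  have mem: "p \<in> elems_of_type (residue X I {\<pi>}) t 1" "q \<in> elems_of_type (residue X I {\<pi>}) t 1"
    using h inX isym by (auto simp: elems_of_type_def residue_def)
  from pplane[OF h(1) pi] mem h(6) obtain l where "l \<in> elems_of_type (residue X I {\<pi>}) t 2" "I p l" "I q l"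
    unfolding projective_plane_def by blast
  then show ?thesis by (auto simp: elems_of_type_def residue_def intro: isym)
qed

lemma pp_meet: "t \<pi> = 3 \<Longrightarrow> t l = 2 \<Longrightarrow> t m = 2 \<Longrightarrow> I l \<pi> \<Longrightarrow> I m \<pi> \<Longrightarrow> l \<noteq> m \<Longrightarrow>
   \<exists>p. t p = 1 \<and> I p \<pi> \<and> I p l \<and> I p m"
proof -
  assume h: "t \<pi> = 3" "t l = 2" "t m = 2" "I l \<pi>" "I m \<pi>" "l \<noteq> m"
  have pi: "\<pi> \<in> X" using inX h by blast
  have mem: "l \<in> elems_of_type (residue X I {\<pi>}) t 2" "m \<in> elems_of_type (residue X I {\<pi>}) t 2"
    using h inX isym by (auto simp: elems_of_type_def residue_def)
  from pplane[OF h(1) pi] mem h(6) obtain p where "p \<in> elems_of_type (residue X I {\<pi>}) t 1" "I p l" "I p m"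
    unfolding projective_plane_def by blast
  then show ?thesis by (auto simp: elems_of_type_def residue_def intro: isym)
qed

lemma gq: "t b = 1 \<Longrightarrow> t L = 2 \<Longrightarrow> t \<pi> = 3 \<Longrightarrow> I b L \<Longrightarrow> I b \<pi> \<Longrightarrow>
  \<exists>K \<sigma>. t K = 2 \<and> I b K \<and> I K \<pi> \<and> t \<sigma> = 3 \<and> I L \<sigma> \<and> I K \<sigma>"
proof (cases "I L \<pi>")
  case True
  assume "t b = 1" "t L = 2" "t \<pi> = 3" "I b L" "I b \<pi>"
  then show ?thesis using True by blast
next
  case False
  assume h: "t b = 1" "t L = 2" "t \<pi> = 3" "I b L" "I b \<pi>"
  have b: "b \<in> X" using inX h by blast
  have "generalized_quadrangle (elems_of_type (residue X I {b}) t 2) (elems_of_type (residue X I {b}) t 3) I"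
    using geo b h by (simp add: C3_geometry_def)
  moreover have mem: "L \<in> elems_of_type (residue X I {b}) t 2" "\<pi> \<in> elems_of_type (residue X I {b}) t 3"
    using h inX by (auto simp: elems_of_type_def residue_def)
  ultimately obtain y where "y \<in> elems_of_type (residue X I {b}) t 2 \<and> I y \<pi> \<and>
      (\<exists>m\<in>elems_of_type (residue X I {b}) t 3. I L m \<and> I y m)"
    using False unfolding generalized_quadrangle_def by metis
  then show ?thesis by (auto simp: elems_of_type_def residue_def)
qed

lemma elem1: "x \<in> X \<Longrightarrow> \<exists>z. z \<in> X \<and> I x z \<and> t z \<noteq> t x"
proof -
  assume x: "x \<in> X"
  have "is_flag X I {x}" using x irefl by (simp add: is_flag_def)
  moreover have "card (t ` {x}) \<le> 1" by simp
  ultimately have "residue X I {x} \<noteq> {}" using geo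
    unfolding C3_geometry_def residually_connected3_def by blast
  then obtain z where "z \<in> X" "z \<noteq> x" "I x z" by (auto simp: residue_def)
  then show ?thesis using isame by metis
qed

lemma flag2: "I x y \<Longrightarrow> t x \<noteq> t y \<Longrightarrow> \<exists>z. z \<in> X \<and> I x z \<and> I y z \<and> t z \<noteq> t x \<and> t z \<noteq> t y"
proof -
  assume h: "I x y" "t x \<noteq> t y"
  have "is_flag X I {x,y}" using h inX irefl isym by (auto simp: is_flag_def)
  moreover have "card (t ` {x,y}) = 2" using h by simp
  ultimately have "residue X I {x,y} \<noteq> {}" using geo
    unfolding C3_geometry_def residually_connected3_def by blast
  then obtain z where "z \<in> X" "z \<noteq> x" "z \<noteq> y" "I x z" "I y z" by (auto simp: residue_def)
  then show ?thesis using isame by metis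
qed

lemma plane_on_line: "t M = 2 \<Longrightarrow> M \<in> X \<Longrightarrow> \<exists>\<pi>. t \<pi> = 3 \<and> I M \<pi>"
proof -
  assume h: "t M = 2" "M \<in> X"
  obtain z where z: "z \<in> X" "I M z" "t z \<noteq> 2" using elem1[OF h(2)] h by auto
  show ?thesis
  proof (cases "t z = 3")
    case True then show ?thesis using z by blast
  next
    case False
    then have "t z = 1" using itypes z by auto
    then obtain w where "w \<in> X" "I M w" "t w \<noteq> 2" "t w \<noteq> 1" using flag2[OF z(2)] h by auto
    then show ?thesis using itypes by blast
  qed
qed

lemma point_on_line_plane: "t L = 2 \<Longrightarrow> t \<pi> = 3 \<Longrightarrow> I L \<pi> \<Longrightarrow> \<exists>r. t r = 1 \<and> I L r \<and> I \<pi> r"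
proof -
  assume h: "t L = 2" "t \<pi> = 3" "I L \<pi>"
  obtain w where "w \<in> X" "I L w" "I \<pi> w" "t w \<noteq> 2" "t w \<noteq> 3" using flag2[OF h(3)] h by auto
  then show ?thesis using itypes by blast
qed

lemma line_through_point: "t p = 1 \<Longrightarrow> p \<in> X \<Longrightarrow> \<exists>L. t L = 2 \<and> I p L"
proof -
  assume h: "t p = 1" "p \<in> X"
  obtain z where z: "z \<in> X" "I p z" "t z \<noteq> 1" using elem1[OF h(2)] h by auto
  show ?thesis
  proof (cases "t z = 2")
    case True then show ?thesis using z by blast
  next
    case False
    then have "t z = 3" using itypes z by auto
    then obtain w where "w \<in> X" "I p w" "t w \<noteq> 1" "t w \<noteq> 3" using flag2[OF z(2)] h by auto
    then show ?thesis using itypes by blast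
  qed
qed

end

fun alt :: "('a \<Rightarrow> nat) \<Rightarrow> 'a list \<Rightarrow> bool" where
  "alt t [] = False" | "alt t [p] = (t p = 1)" | "alt t (p#L#rest) = (t p = 1 \<and> t L = 2 \<and> alt t rest)"

lemma alt_short: "alt t R \<Longrightarrow> length R \<le> 5 \<Longrightarrow> (\<exists>p. R=[p] \<and> t p = 1) \<or> (\<exists>p L q. R=[p,L,q] \<and> t p = 1 \<and> t L = 2 \<and> t q = 1) \<or>
  (\<exists>p L q M r. R=[p,L,q,M,r] \<and> t p = 1 \<and> t L = 2 \<and> t q = 1 \<and> t M = 2 \<and> t r = 1)"
  apply (cases R, simp) apply (rename_tac a r, case_tac r, simp)
  apply (rename_tac a1 r1, case_tac r1, simp)
  apply (rename_tac a2 r2, case_tac r2, simp)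
  apply (rename_tac a3 r3, case_tac r3, simp)
  apply (rename_tac a4 r4, case_tac r4, simp)
  apply (rename_tac a5 r5, case_tac r5, simp)
  by auto

lemma seven: "length xs > 5 \<Longrightarrow> odd (length xs) \<Longrightarrow> \<exists>a L b M c N d rest. xs = a#L#b#M#c#N#d#rest"
  apply (cases xs, simp) apply (rename_tac a r, case_tac r, simp)
  apply (rename_tac a1 r1, case_tac r1, simp)
  apply (rename_tac a2 r2, case_tac r2, simp)
  apply (rename_tac a3 r3, case_tac r3, simp)
  apply (rename_tac a4 r4, case_tac r4, simp)
  apply (rename_tac a5 r5, case_tac r5, simp)
  apply (rename_tac a6 r6, case_tac r6, simp)
  by auto

lemma alt_odd: "alt t Q \<Longrightarrow> odd (length Q)"
  by (induction t Q rule: alt.induct) auto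

lemma alt_ne: "alt t Q \<Longrightarrow> Q \<noteq> [] \<and> t (hd Q) = 1"
  by (induction t Q rule: alt.induct) auto

lemma alt_last: "alt t Q \<Longrightarrow> t (last Q) = 1"
  by (induction t Q rule: alt.induct) auto

lemma alt_swap: "alt t (d#rest) \<Longrightarrow> t p = 1 \<Longrightarrow> alt t (p#rest)"
  by (cases rest) auto

lemma alt_app: "alt t R \<Longrightarrow> alt t (d#rest) \<Longrightarrow> alt t (R @ rest)"
  by (induction t R rule: alt.induct) (auto intro: alt_swap)

context C3 begin

lemma plane_collapse:
  assumes P: "is_path X I P" and s: "t \<sigma> = 3" and inc: "\<forall>y\<in>set P. I \<sigma> y"
    and h: "t (hd P) = 1" "t (last P) = 1"
  shows "\<exists>R. alt t R \<and> length R \<le> 3 \<and> hd R = hd P \<and> last R = last P \<and> homotopic X I P R"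
proof -
  have ne: "P \<noteq> []" using P by (simp add: is_path_def)
  have ix: "I \<sigma> (hd P)" "I \<sigma> (last P)" using inc ne by auto
  have st: "homotopic X I P [hd P, \<sigma>, last P]" using star[OF P] inc by simp
  show ?thesis
  proof (cases "hd P = last P")
    case True
    have "homotopic X I [hd P, \<sigma>, hd P] [hd P]" using bkm isym ix by blast
    then have "homotopic X I P [hd P]" using st True homotopic_trans by metis
    then show ?thesis using h True by (intro exI[of _ "[hd P]"]) auto
  next
    case False
    obtain M where M: "t M = 2" "I M \<sigma>" "I (hd P) M" "I (last P) M"
      using pp_line[OF s h(1) h(2)] ix isym False by metis
    have pM: "is_path X I [hd P, M, last P]" using M inX isym by (auto simp: is_path_Cons2)
    have "homotopic X I P [hd P, M, last P]"
      using star2[OF P pM] inc ix M isym irefl inX by auto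
    then show ?thesis using h M by (intro exI[of _ "[hd P, M, last P]"]) auto
  qed
qed

lemma seg:
  assumes P: "is_path X I [a,L,b,M,c,N,d]"
    and ty: "t a = 1" "t L = 2" "t b = 1" "t M = 2" "t c = 1" "t N = 2" "t d = 1"
  shows "\<exists>R. alt t R \<and> length R \<le> 5 \<and> hd R = a \<and> last R = d \<and> homotopic X I [a,L,b,M,c,N,d] R"
proof -
  have i: "I a L" "I L b" "I b M" "I M c" "I c N" "I N d" "M \<in> X" using P by (auto simp: is_path_Cons2)
  obtain \<pi> where pi: "t \<pi> = 3" "I M \<pi>" using plane_on_line[OF ty(4) i(7)] by blast
  have bpi: "I b \<pi>" using digon[OF ty(3) ty(4) pi(1) i(3) pi(2)] .
  have cpi: "I c \<pi>" using digon[OF ty(5) ty(4) pi(1) isym[OF i(4)] pi(2)] .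
  obtain K \<sigma> where K: "t K = 2" "I b K" "I K \<pi>" "t \<sigma> = 3" "I L \<sigma>" "I K \<sigma>"
    using gq[OF ty(3) ty(2) pi(1) isym[OF i(2)] bpi] by blast
  obtain Ns \<tau> where Ns: "t Ns = 2" "I c Ns" "I Ns \<pi>" "t \<tau> = 3" "I N \<tau>" "I Ns \<tau>"
    using gq[OF ty(5) ty(6) pi(1) i(5) cpi] by blast
  obtain q where q: "t q = 1" "I q \<pi>" "I q K" "I q Ns"
  proof (cases "K = Ns")
    case True then show ?thesis using that ty(3) bpi K(2) by blast
  next
    case False then show ?thesis using that pp_meet[OF pi(1) K(1) Ns(1) K(3) Ns(3)] by blast
  qed
  have pBK: "is_path X I [b,K,q,Ns,c]" using K Ns q inX isym by (auto simp: is_path_Cons2)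
  have pBM: "is_path X I [b,M,c]" using i inX by (auto simp: is_path_Cons2)
  have H1: "homotopic X I [b,M,c] [b,K,q,Ns,c]"
    using star2[OF pBM pBK, of \<pi>] bpi cpi pi K Ns q isym inX irefl by auto
  have H2: "homotopic X I ([a,L]@[b,M,c]@[N,d]) ([a,L]@[b,K,q,Ns,c]@[N,d])"
    using homotopic_cong[OF H1, of "[a,L]" "[N,d]"] P by simp
  have Pbig: "is_path X I [a,L,b,K,q,Ns,c,N,d]" using homotopic_ends[OF H2] by simp
  have P1: "is_path X I [a,L,b,K,q]" using Pbig by (simp add: is_path_Cons2)
  have P2: "is_path X I [q,Ns,c,N,d]" using Pbig by (simp add: is_path_Cons2)
  have as: "I a \<sigma>" using digon[OF ty(1) ty(2) K(4) i(1) K(5)] .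
  have bs: "I b \<sigma>" using digon[OF ty(3) ty(2) K(4) isym[OF i(2)] K(5)] .
  have qs: "I q \<sigma>" using digon[OF q(1) K(1) K(4) q(3) K(6)] .
  obtain R1 where R1: "alt t R1" "length R1 \<le> 3" "hd R1 = a" "last R1 = q" "homotopic X I [a,L,b,K,q] R1"
    using plane_collapse[OF P1 K(4)] as bs qs K isym ty q by auto
  have qt: "I q \<tau>" using digon[OF q(1) Ns(1) Ns(4) q(4) Ns(6)] .
  have ct: "I c \<tau>" using digon[OF ty(5) Ns(1) Ns(4) Ns(2) Ns(6)] .
  have dt: "I d \<tau>" using digon[OF ty(7) ty(6) Ns(4) isym[OF i(6)] Ns(5)] .
  obtain R2 where R2: "alt t R2" "length R2 \<le> 3" "hd R2 = q" "last R2 = d" "homotopic X I [q,Ns,c,N,d] R2"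
    using plane_collapse[OF P2 Ns(4)] qt ct dt Ns isym ty q by auto
  have n1: "R1 \<noteq> []" and n2: "R2 \<noteq> []" using alt_ne R1(1) R2(1) by auto
  have H3: "homotopic X I ([]@[a,L,b,K,q]@[Ns,c,N,d]) ([]@R1@[Ns,c,N,d])"
    using homotopic_cong[OF R1(5), of "[]" "[Ns,c,N,d]"] Pbig by simp
  have e1: "R1 @ [Ns,c,N,d] = butlast R1 @ [q,Ns,c,N,d] @ []"
    using n1 R1(4) by (metis append_butlast_last_id append_Cons append_Nil append_assoc append_Nil2)
  have H4: "homotopic X I (butlast R1 @ [q,Ns,c,N,d] @ []) (butlast R1 @ R2 @ [])"
    using homotopic_cong[OF R2(5), of "butlast R1" "[]"] homotopic_ends[OF H3] e1 by simp
  have e2: "butlast R1 @ R2 = R1 @ tl R2"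
    using n1 n2 R1(4) R2(3) by (metis append_butlast_last_id append_Cons append_assoc list.collapse append_Nil)
  have Hall: "homotopic X I [a,L,b,M,c,N,d] (R1 @ tl R2)"
    using homotopic_trans[OF H2 homotopic_trans[OF _ H4]] H3 e1 e2 by simp
  have alt3: "alt t (R1 @ tl R2)" using alt_app[OF R1(1), of q] R2(1) R2(3) n2 by (metis list.collapse)
  have len: "length (R1 @ tl R2) \<le> 5" using R1(2) R2(2) by simp
  have hd3: "hd (R1 @ tl R2) = a" using R1(3) n1 by simp
  have last3: "last (R1 @ tl R2) = d"
    using homotopic_ends[OF Hall] by simp
  show ?thesis using alt3 len hd3 last3 Hall by blast
qed

lemma reduce: "alt t Q \<Longrightarrow> is_path X I Q \<Longrightarrow> \<exists>R. alt t R \<and> length R \<le> 5 \<and> homotopic X I Q R"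
proof (induction "length Q" arbitrary: Q rule: less_induct)
  case less
  show ?case
  proof (cases "length Q \<le> 5")
    case True then show ?thesis using less homotopic_refl by blast
  next
    case False
    then obtain a L b M c N d rest where Q: "Q = a#L#b#M#c#N#d#rest"
      using seven alt_odd less(2) by (metis not_le)
    have ty: "t a = 1" "t L = 2" "t b = 1" "t M = 2" "t c = 1" "t N = 2" "alt t (d#rest)"
      using less(2) Q by auto
    have td: "t d = 1" using alt_ne[OF ty(7)] by simp
    have P7: "is_path X I [a,L,b,M,c,N,d]" using less(3) Q inX by (auto simp: is_path_Cons2)
    obtain R0 where R0: "alt t R0" "length R0 \<le> 5" "hd R0 = a" "last R0 = d" "homotopic X I [a,L,b,M,c,N,d] R0"
      using seg[OF P7 ty(1-6) td] by blast
    have H: "homotopic X I ([]@[a,L,b,M,c,N,d]@rest) ([]@R0@rest)"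
      using homotopic_cong[OF R0(5), of "[]" rest] less(3) Q by simp
    have a2: "alt t (R0 @ rest)" using alt_app[OF R0(1) ty(7)] .
    have l: "length (R0 @ rest) < length Q" using R0(2) Q by simp
    obtain R where "alt t R" "length R \<le> 5" "homotopic X I (R0 @ rest) R"
      using less(1)[OF l a2] homotopic_ends[OF H] by auto
    then show ?thesis using H Q homotopic_trans[of X I Q "R0 @ rest"] by auto
  qed
qed

end

context C3 begin

lemma nf: "is_path X I P \<Longrightarrow> t (last P) = 1 \<Longrightarrow>
  \<exists>Q. alt t Q \<and> I (hd P) (hd Q) \<and> homotopic X I P ((if t (hd P) = 1 then [] else [hd P]) @ Q)"
proof (induction P)
  case Nil then show ?case by (simp add: is_path_def)
next
  case (Cons x P')
  show ?case
  proof (cases P')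
    case Nil
    then have "x \<in> X" "t x = 1" using Cons by auto
    then show ?thesis using Nil irefl homotopic_refl[of X I "[x]"] by (intro exI[of _ "[x]"]) auto
  next
    fix y rest assume Cons2: "P' = y # rest"
    have x: "x \<in> X" and xy: "I x y" and pP: "is_path X I P'" using Cons(2) Cons2 by (auto simp: is_path_Cons2)
    have lP: "t (last P') = 1" using Cons(3) Cons2 by simp
    obtain Q where Q: "alt t Q" "I y (hd Q)" "homotopic X I P' ((if t y = 1 then [] else [y]) @ Q)"
      using Cons(1)[OF pP lP] Cons2 by (metis list.sel(1))
    obtain q Qt where qQ: "Q = q # Qt" using alt_ne[OF Q(1)] by (cases Q) auto
    have tq: "t q = 1" using alt_ne[OF Q(1)] qQ by simp
    have yq: "I y q" using Q(2) qQ by simp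
    have H0: "homotopic X I (x#P') (x # (if t y = 1 then [] else [y]) @ Q)"
      using homotopic_cong[OF Q(3), of "[x]" "[]"] Cons(2) by simp
    have pH0: "is_path X I (x # (if t y = 1 then [] else [y]) @ Q)" using homotopic_ends[OF H0] by simp
    let ?G = "\<exists>Q. alt t Q \<and> I (hd (x#P')) (hd Q) \<and> homotopic X I (x#P') ((if t (hd (x#P')) = 1 then [] else [hd (x#P')]) @ Q)"
    have tx: "t x = 1 \<or> t x = 2 \<or> t x = 3" using itypes x by simp
    have ty: "t y = 1 \<or> t y = 2 \<or> t y = 3" using itypes inX xy by blast
    have sub: "\<And>u v A B. homotopic X I u v \<Longrightarrow> is_path X I (A@u@B) \<Longrightarrow> homotopic X I (x#P') (A@u@B) \<Longrightarrow>
       homotopic X I (x#P') (A@v@B)"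
      using homotopic_cong homotopic_trans by metis
    show ?G
    proof -
      { assume a: "t x = 1" "t y = 1"
        have "x = y" using isame xy a by simp
        moreover have "q = y" using isame[OF yq] a tq by simp
        ultimately have H: "homotopic X I (x#P') ([]@[x,x]@Qt)" using H0 a qQ by simp
        have "homotopic X I (x#P') ([]@[x]@Qt)" using sub[OF dup[OF x] homotopic_ends[OF H, THEN conjunct2, THEN conjunct1] H] .
        then have ?G using a Q(1) qQ \<open>x = y\<close> \<open>q = y\<close> irefl x by (intro exI[of _ Q]) auto }
      moreover
      { assume a: "t x = 1" "t y = 2"
        have ?G using a H0 Q(1) irefl x by (intro exI[of _ "x#y#Q"]) auto }
      moreover
      { assume a: "t x = 1" "t y = 3"
        have H: "homotopic X I (x#P') ([]@[x,y,q]@Qt)" using H0 a qQ by simp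
        have pth: "is_path X I ([]@[x,y,q]@Qt)" using homotopic_ends[OF H] by simp
        have ?G
        proof (cases "x = q")
          case True
          have "homotopic X I (x#P') ([]@[x]@Qt)" using sub[OF bkm[OF xy], of "[]" Qt] H pth True by simp
          then show ?G using a Q(1) qQ True irefl x by (intro exI[of _ Q]) auto
        next
          case False
          obtain M where M: "t M = 2" "I M y" "I x M" "I q M"
            using pp_line[of y x q] a tq xy isym[OF yq] False by blast
          have p3: "is_path X I [x,y,q]" and p3': "is_path X I [x,M,q]"
            using xy yq M inX isym by (auto simp: is_path_Cons2)
          have "homotopic X I [x,y,q] [x,M,q]"
            using star2[OF p3 p3', of y] xy yq M isym irefl inX by auto
          then have "homotopic X I (x#P') ([]@[x,M,q]@Qt)" using sub[OF _ pth H] by blast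
          then show ?G using a Q(1) qQ M irefl x by (intro exI[of _ "x#M#Q"]) auto
        qed }
      moreover
      { assume a: "t x = 2" "t y = 1"
        have "q = y" using isame[OF yq] a tq by simp
        then have ?G using a H0 Q(1) xy qQ by (intro exI[of _ Q]) auto }
      moreover
      { assume a: "t x = 2" "t y = 2"
        have "x = y" using isame xy a by simp
        then have H: "homotopic X I (x#P') ([]@[x,x]@Q)" using H0 a by simp
        have "homotopic X I (x#P') ([]@[x]@Q)" using sub[OF dup[OF x] homotopic_ends[OF H, THEN conjunct2, THEN conjunct1] H] .
        then have ?G using a Q \<open>x = y\<close> by (intro exI[of _ Q]) auto }
      moreover
      { assume a: "t x = 2" "t y = 3"
        have H: "homotopic X I (x#P') ([]@[x,y,q]@Qt)" using H0 a qQ by simp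
        have pth: "is_path X I ([]@[x,y,q]@Qt)" using homotopic_ends[OF H] by simp
        have ?G
        proof (cases "I x q")
          case True
          have "homotopic X I (x#P') ([]@[x,q]@Qt)" using sub[OF flag3[OF xy yq True] pth H] .
          then show ?G using a Q(1) qQ True by (intro exI[of _ Q]) auto
        next
          case False
          obtain r where r: "t r = 1" "I x r" "I y r" using point_on_line_plane[OF a xy] by blast
          have rq: "r \<noteq> q" using False r by blast
          obtain M where M: "t M = 2" "I M y" "I r M" "I q M"
            using pp_line[of y r q] a tq r isym yq rq by blast
          have p3: "is_path X I [x,y,q]" and p3': "is_path X I [x,r,M,q]"
            using xy yq M r inX isym by (auto simp: is_path_Cons2)
          have "homotopic X I [x,y,q] [x,r,M,q]"
            using star2[OF p3 p3', of y] xy yq M r isym irefl inX by auto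
          then have "homotopic X I (x#P') ([]@[x,r,M,q]@Qt)" using sub[OF _ pth H] by blast
          then show ?G using a Q(1) qQ M r by (intro exI[of _ "r#M#Q"]) auto
        qed }
      moreover
      { assume a: "t x = 3" "t y = 1"
        have "q = y" using isame[OF yq] a tq by simp
        then have ?G using a H0 Q(1) xy qQ by (intro exI[of _ Q]) auto }
      moreover
      { assume a: "t x = 3" "t y = 2"
        have H: "homotopic X I (x#P') ([]@[x,y,q]@Qt)" using H0 a qQ by simp
        have pth: "is_path X I ([]@[x,y,q]@Qt)" using homotopic_ends[OF H] by simp
        have xq: "I x q" using digon[OF tq a(2) a(1) isym[OF yq] isym[OF xy]] isym by blast
        have "homotopic X I (x#P') ([]@[x,q]@Qt)" using sub[OF flag3[OF xy yq xq] pth H] .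
        then have ?G using a Q(1) qQ xq by (intro exI[of _ Q]) auto }
      moreover
      { assume a: "t x = 3" "t y = 3"
        have "x = y" using isame xy a by simp
        then have H: "homotopic X I (x#P') ([]@[x,x]@Q)" using H0 a by simp
        have "homotopic X I (x#P') ([]@[x]@Q)" using sub[OF dup[OF x] homotopic_ends[OF H, THEN conjunct2, THEN conjunct1] H] .
        then have ?G using a Q \<open>x = y\<close> by (intro exI[of _ Q]) auto }
      ultimately show ?G using tx ty by blast
    qed
  qed
qed

end

theorem mainTheorem6:
  fixes X :: "'a set" and t :: "'a \<Rightarrow> nat" and I :: "'a \<Rightarrow> 'a \<Rightarrow> bool"
    and c :: "'a list"
  assumes "C3_geometry X t I"
    and "closed_path X I c"
    and "t (hd c) = 1"
  shows "\<exists>c'. primitive_path X t I c' \<and> homotopic X I c c'"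
proof -
  interpret C3 X t I using assms(1) by unfold_locales
  have pc: "is_path X I c" "hd c = last c" using assms(2) by (auto simp: closed_path_def)
  obtain Q where Q: "alt t Q" "homotopic X I c Q"
    using nf[OF pc(1)] assms(3) pc(2) by auto
  obtain R where R: "alt t R" "length R \<le> 5" "homotopic X I Q R"
    using reduce[OF Q(1)] homotopic_ends[OF Q(2)] by blast
  have H: "homotopic X I c R" using Q(2) R(3) homotopic_trans by blast
  have e: "is_path X I R" "hd R = hd c" "last R = hd c" using homotopic_ends[OF H] pc(2) by auto
  have ext: "\<And>p L. t p = 1 \<Longrightarrow> t L = 2 \<Longrightarrow> I p L \<Longrightarrow> homotopic X I c [p,L,p] \<Longrightarrow> \<exists>c'. primitive_path X t I c' \<and> homotopic X I c c'"
  proof -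
    fix p L assume a: "t p = (1::nat)" "t L = 2" "I p L" "homotopic X I c [p,L,p]"
    have h1: "homotopic X I [p] [p,L,p]" using bkm[OF a(3)] homotopic_sym by blast
    have h2: "homotopic X I ([p,L]@[p]@[]) ([p,L]@[p,L,p]@[])"
      using homotopic_cong[OF h1, of "[p,L]" "[]"] homotopic_ends[OF a(4)] by simp
    have h3: "homotopic X I c [p,L,p,L,p]" using homotopic_trans[OF a(4)] h2 by simp
    have "primitive_path X t I [p,L,p,L,p]" unfolding primitive_path_def
      using homotopic_ends[OF h3] a by auto
    then show "\<exists>c'. primitive_path X t I c' \<and> homotopic X I c c'" using h3 by blast
  qed
  from alt_short[OF R(1) R(2)] show ?thesis
  proof (elim disjE exE conjE)
    fix p assume r: "R = [p]" "t p = 1"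
    then have "p \<in> X" using e by simp
    then obtain L where L: "t L = 2" "I p L" using line_through_point r by blast
    have "homotopic X I c [p]" using H r by simp
    then have "homotopic X I c [p,L,p]" using bkm[OF L(2)] homotopic_sym homotopic_trans by blast
    then show ?thesis using ext r L by blast
  next
    fix p L q assume r: "R = [p,L,q]" "t p = 1" "t L = 2" "t q = 1"
    then have "q = p" "I p L" using e by (auto simp: is_path_Cons2)
    then show ?thesis using ext r H by blast
  next
    fix p L q M s assume r: "R = [p,L,q,M,s]" "t p = 1" "t L = 2" "t q = 1" "t M = 2" "t s = 1"
    then have "s = p" using e by simp
    then have "primitive_path X t I R" unfolding primitive_path_def using r e by auto
    then show ?thesis using H by blast
  qed
qed
end
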